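(* Let $C\subseteq\mathbb{F}_q^n$ be a linear code and $(A,B)$ a $2$-power $t$-error locating pair for $C$. Let $\mathbf{y}=\mathbf{c}+\mathbf{e}$ with $\mathbf{c}\in C$, $\mathrm{w}(\mathbf{e})=t$, $I_{\mathbf{e}}=\mathrm{supp}(\mathbf{e})$, and $\mathbf{e}^{(1)}=\mathbf{e}$, $\mathbf{e}^{(2)}=\mathbf{y}^2-\mathbf{c}^2$. Let $M=M_1\cap M_2$ with $M_1=\{\mathbf{a}\in A\mid \langle \mathbf{a}*\mathbf{y},\mathbf{b}\rangle=0\ \forall \mathbf{b}\in B\}$, $M_2=\{\mathbf{a}\in A\mid \langle \mathbf{a}*\mathbf{y}^2,\mathbf{v}\rangle=0\ \forall \mathbf{v}\in (B^{\perp}*C)^{\perp}\}$. Then $$M_{I_{\mathbf{e}}}=\big((\mathbf{e}^{(1)}*B)_{I_{\mathbf{e}}}\big)^{\perp}\cap \big((\mathbf{e}^{(2)}*(B^\perp*C)^\perp)_{I_{\mathbf{e}}}\big)^{\perp},$$ duals taken in $\mathbb{F}_q^{|I_{\mathbf{e}}|}$.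
   Context: All codes are $\mathbb{F}_q$-linear subspaces of $\mathbb{F}_q^n$. $\mathbf{u}*\mathbf{v}=(u_1v_1,\dots,u_nv_n)$, $\mathbf{u}^i=(u_1^i,\dots,u_n^i)$; $A*B$ is the span of all $\mathbf{a}*\mathbf{b}$; $\mathbf{u}*X=\{\mathbf{u}*\mathbf{x}:\mathbf{x}\in X\}$; $\langle\mathbf{u},\mathbf{v}\rangle=\sum_iu_iv_i$, $X^\perp$ the dual. $\mathrm{w}$ Hamming weight, $\mathrm{d}$ minimum distance, $\mathrm{supp}(\mathbf{x})=\{i:x_i\ne0\}$. For $J=\{j_1<\dots<j_s\}$, $X_J=\{(x_{j_1},\dots,x_{j_s}):\mathbf{x}\in X\}$. A pair $(A,B)$ is a $2$-power $t$-error locating pair for $C$ if: (1) $A*B\subseteq C^\perp$; (2) $\dim A>t$; (3) $\mathrm{d}(A^\perp)>t$; (4) $\mathrm{d}(A)+\mathrm{d}(C)>n$; (5) $\dim B+\dim (B^\perp*C)^\perp\ge t$. *)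

theory Defs
  imports Main
begin

text \<open>Vectors of F_q^n are modelled as functions nat => 'a vanishing outside {0..<n};
 F_q is any finite field (type class finite + field).\<close>

definition vecs :: "nat \<Rightarrow> (nat \<Rightarrow> 'a::zero) set" where
  "vecs n = {x. \<forall>i. n \<le> i \<longrightarrow> x i = 0}"

definition is_code :: "nat \<Rightarrow> (nat \<Rightarrow> 'a::field) set \<Rightarrow> bool" where
  "is_code n X \<longleftrightarrow> X \<subseteq> vecs n \<and> (\<lambda>i. 0) \<in> X \<and>
     (\<forall>x\<in>X. \<forall>y\<in>X. (\<lambda>i. x i + y i) \<in> X) \<and>
     (\<forall>a. \<forall>x\<in>X. (\<lambda>i. a * x i) \<in> X)"

definition cspan :: "nat \<Rightarrow> (nat \<Rightarrow> 'a::field) set \<Rightarrow> (nat \<Rightarrow> 'a) set" where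
  "cspan n S = \<Inter>{V. is_code n V \<and> S \<subseteq> V}"

definition cdim :: "nat \<Rightarrow> (nat \<Rightarrow> 'a::field) set \<Rightarrow> nat" where
  "cdim n V = (LEAST k. \<exists>S. finite S \<and> card S = k \<and> S \<subseteq> V \<and> cspan n S = V)"

definition star :: "(nat \<Rightarrow> 'a::times) \<Rightarrow> (nat \<Rightarrow> 'a) \<Rightarrow> nat \<Rightarrow> 'a" where
  "star u v = (\<lambda>i. u i * v i)"

definition vpow :: "(nat \<Rightarrow> 'a::power) \<Rightarrow> nat \<Rightarrow> nat \<Rightarrow> 'a" where
  "vpow u k = (\<lambda>i. u i ^ k)"

definition star_code :: "nat \<Rightarrow> (nat \<Rightarrow> 'a::field) set \<Rightarrow> (nat \<Rightarrow> 'a) set \<Rightarrow> (nat \<Rightarrow> 'a) set" where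
  "star_code n A B = cspan n {star a b | a b. a \<in> A \<and> b \<in> B}"

definition inner :: "nat \<Rightarrow> (nat \<Rightarrow> 'a::comm_ring_1) \<Rightarrow> (nat \<Rightarrow> 'a) \<Rightarrow> 'a" where
  "inner n u v = (\<Sum>i<n. u i * v i)"

definition dual :: "nat \<Rightarrow> (nat \<Rightarrow> 'a::field) set \<Rightarrow> (nat \<Rightarrow> 'a) set" where
  "dual n X = {v \<in> vecs n. \<forall>x\<in>X. inner n x v = 0}"

definition supp :: "nat \<Rightarrow> (nat \<Rightarrow> 'a::zero) \<Rightarrow> nat set" where
  "supp n x = {i. i < n \<and> x i \<noteq> 0}"

definition weight :: "nat \<Rightarrow> (nat \<Rightarrow> 'a::zero) \<Rightarrow> nat" where
  "weight n x = card (supp n x)"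

text \<open>Minimum distance; convention d({0}) = n+1 (larger than any weight).\<close>
definition mindist :: "nat \<Rightarrow> (nat \<Rightarrow> 'a::zero) set \<Rightarrow> nat" where
  "mindist n X = (if \<forall>x\<in>X. weight n x = 0 then n + 1
                  else Min {weight n x | x. x \<in> X \<and> weight n x \<noteq> 0})"

text \<open>Puncturing X_J: restriction to coordinates in J (zero elsewhere); this is
 the natural isomorphic copy of X_J inside F_q^{|J|}.\<close>
definition punct :: "nat set \<Rightarrow> (nat \<Rightarrow> 'a::zero) set \<Rightarrow> (nat \<Rightarrow> 'a) set" where
  "punct J X = (\<lambda>x i. if i \<in> J then x i else 0) ` X"

text \<open>Dual inside F_q^{|J|}, with F_q^{|J|} represented as functions supported on J.\<close>
definition dual_on :: "nat set \<Rightarrow> (nat \<Rightarrow> 'a::field) set \<Rightarrow> (nat \<Rightarrow> 'a) set" where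
  "dual_on J Y = {v. (\<forall>i. i \<notin> J \<longrightarrow> v i = 0) \<and> (\<forall>y\<in>Y. (\<Sum>i\<in>J. y i * v i) = 0)}"

definition two_power_ELP :: "nat \<Rightarrow> nat \<Rightarrow> (nat \<Rightarrow> 'a::field) set \<Rightarrow> (nat \<Rightarrow> 'a) set
     \<Rightarrow> (nat \<Rightarrow> 'a) set \<Rightarrow> bool" where
  "two_power_ELP n t A B C \<longleftrightarrow>
     star_code n A B \<subseteq> dual n C \<and>
     cdim n A > t \<and>
     mindist n (dual n A) > t \<and>
     mindist n A + mindist n C > n \<and>
     cdim n B + cdim n (dual n (star_code n (dual n B) C)) \<ge> t"

end

theory Submission imports Defs begin

lemma span_full:
  fixes W :: "(nat \<Rightarrow> 'a::field) set"
  assumes "finite J"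
  shows "(\<forall>w\<in>W. \<forall>i. i \<notin> J \<longrightarrow> w i = 0) \<Longrightarrow>
   (\<forall>w\<in>W. \<forall>v\<in>W. (\<lambda>i. w i + v i) \<in> W) \<Longrightarrow>
   (\<forall>a. \<forall>w\<in>W. (\<lambda>i. a * w i) \<in> W) \<Longrightarrow>
   (\<lambda>i. 0) \<in> W \<Longrightarrow>
   (\<forall>u. (\<forall>i. i \<notin> J \<longrightarrow> u i = 0) \<longrightarrow> (\<forall>w\<in>W. (\<Sum>i\<in>J. w i * u i) = 0) \<longrightarrow> u = (\<lambda>i. 0)) \<Longrightarrow>
   (\<forall>i. i \<notin> J \<longrightarrow> v i = 0) \<Longrightarrow> v \<in> W"
  using assms
proof (induction J arbitrary: W v rule: finite_induct)
  case empty
  then have "v = (\<lambda>i. 0)" by auto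
  then show ?case using empty by simp
next
  case (insert j J W v)
  note sup = insert.prems(1) and add = insert.prems(2) and sc = insert.prems(3)
    and z = insert.prems(4) and orth = insert.prems(5) and vs = insert.prems(6)
  show ?case
  proof (cases "\<forall>w\<in>W. w j = 0")
    case True
    define u :: "nat \<Rightarrow> 'a" where "u = (\<lambda>i. if i = j then 1 else 0)"
    have "\<forall>w\<in>W. (\<Sum>i\<in>insert j J. w i * u i) = 0"
    proof
      fix w assume "w \<in> W"
      have "(\<Sum>i\<in>insert j J. w i * u i) = w j * u j + (\<Sum>i\<in>J. w i * u i)"
        using insert.hyps by simp
      also have "(\<Sum>i\<in>J. w i * u i) = 0" using insert.hyps by (auto simp: u_def intro!: sum.neutral)
      finally show "(\<Sum>i\<in>insert j J. w i * u i) = 0" using True \<open>w \<in> W\<close> by simp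
    qed
    moreover have "\<forall>i. i \<notin> insert j J \<longrightarrow> u i = 0" by (auto simp: u_def)
    ultimately have "u = (\<lambda>i. 0)" using orth by blast
    then have "u j = 0" by simp
    then have False by (simp add: u_def)
    then show ?thesis ..
  next
    case False
    then obtain w0 where w0: "w0 \<in> W" "w0 j \<noteq> 0" by auto
    define w1 where "w1 = (\<lambda>i. inverse (w0 j) * w0 i)"
    have w1W: "w1 \<in> W" using sc w0 by (simp add: w1_def)
    have w1j: "w1 j = 1" using w0 by (simp add: w1_def)
    define W0 where "W0 = {w \<in> W. w j = 0}"
    have IH: "v' \<in> W0" if "\<forall>i. i \<notin> J \<longrightarrow> v' i = 0" for v'
    proof (rule insert.IH[OF _ _ _ _ _ that])
      show "\<forall>w\<in>W0. \<forall>i. i \<notin> J \<longrightarrow> w i = 0" using sup by (auto simp: W0_def)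
      show "\<forall>w\<in>W0. \<forall>v\<in>W0. (\<lambda>i. w i + v i) \<in> W0" using add by (auto simp: W0_def)
      show "\<forall>a. \<forall>w\<in>W0. (\<lambda>i. a * w i) \<in> W0" using sc by (auto simp: W0_def)
      show "(\<lambda>i. 0) \<in> W0" using z by (auto simp: W0_def)
      show "\<forall>u. (\<forall>i. i \<notin> J \<longrightarrow> u i = 0) \<longrightarrow> (\<forall>w\<in>W0. (\<Sum>i\<in>J. w i * u i) = 0) \<longrightarrow> u = (\<lambda>i. 0)"
      proof (intro allI impI)
        fix u :: "nat \<Rightarrow> 'a"
        assume us: "\<forall>i. i \<notin> J \<longrightarrow> u i = 0" and uo: "\<forall>w\<in>W0. (\<Sum>i\<in>J. w i * u i) = 0"
        define s where "s = (\<Sum>i\<in>J. w1 i * u i)"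
        define u2 where "u2 = u(j := - s)"
        have "\<forall>w\<in>W. (\<Sum>i\<in>insert j J. w i * u2 i) = 0"
        proof
          fix w assume wW: "w \<in> W"
          define w' where "w' = (\<lambda>i. w i + (- w j) * w1 i)"
          have ww: "(\<lambda>i. (- w j) * w1 i) \<in> W" using sc w1W by blast
          have "w' \<in> W" unfolding w'_def using add[rule_format, OF wW ww] by simp
          moreover have "w' j = 0" using w1j by (simp add: w'_def)
          ultimately have "(\<Sum>i\<in>J. w' i * u i) = 0" using uo by (auto simp: W0_def)
          moreover have "(\<Sum>i\<in>J. w' i * u i) = (\<Sum>i\<in>J. w i * u i) - w j * s"
            by (simp add: w'_def s_def algebra_simps sum.distrib sum_distrib_left sum_subtractf)
          moreover have "(\<Sum>i\<in>insert j J. w i * u2 i) = w j * (- s) + (\<Sum>i\<in>J. w i * u i)"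
            using insert.hyps by (simp add: u2_def, intro sum.cong, auto)
          ultimately show "(\<Sum>i\<in>insert j J. w i * u2 i) = 0" by (simp add: algebra_simps)
        qed
        moreover have "\<forall>i. i \<notin> insert j J \<longrightarrow> u2 i = 0" using us by (auto simp: u2_def)
        ultimately have "u2 = (\<lambda>i. 0)" using orth by blast
        moreover have "u j = 0" using us insert.hyps by auto
        ultimately show "u = (\<lambda>i. 0)" by (auto simp: u2_def fun_eq_iff split: if_splits)
      qed
    qed
    define v' where "v' = (\<lambda>i. v i + (- v j) * w1 i)"
    have "\<forall>i. i \<notin> J \<longrightarrow> v' i = 0"
    proof (intro allI impI)
      fix i assume "i \<notin> J"
      show "v' i = 0"
      proof (cases "i = j")
        case True then show ?thesis using w1j by (simp add: v'_def)
      next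
        case False then show ?thesis using vs sup w1W \<open>i \<notin> J\<close> by (simp add: v'_def)
      qed
    qed
    then have "v' \<in> W" using IH W0_def by blast
    moreover have "(\<lambda>i. v j * w1 i) \<in> W" using sc w1W by blast
    ultimately have "(\<lambda>i. v' i + v j * w1 i) \<in> W" using add by (metis (no_types))
    moreover have "(\<lambda>i. v' i + v j * w1 i) = v" by (simp add: v'_def fun_eq_iff algebra_simps)
    ultimately show ?thesis by simp
  qed
qed

lemma cspan_gen: "S \<subseteq> cspan n S"
  unfolding cspan_def by blast

theorem mainTheorem6:
  fixes n t :: nat and A B C :: "(nat \<Rightarrow> 'a::{finite,field}) set"
    and c e y e2 :: "nat \<Rightarrow> 'a" and I :: "nat set"
    and M1 M2 M :: "(nat \<Rightarrow> 'a) set"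
  assumes "is_code n C" and "is_code n A" and "is_code n B"
    and "two_power_ELP n t A B C"
    and "c \<in> C" and "e \<in> vecs n" and "weight n e = t"
  defines "y \<equiv> (\<lambda>i. c i + e i)"
    and "I \<equiv> supp n e"
    and "e2 \<equiv> (\<lambda>i. vpow y 2 i - vpow c 2 i)"
    and "M1 \<equiv> {a \<in> A. \<forall>b\<in>B. inner n (star a y) b = 0}"
    and "M2 \<equiv> {a \<in> A. \<forall>v\<in>dual n (star_code n (dual n B) C). inner n (star a (vpow y 2)) v = 0}"
    and "M \<equiv> M1 \<inter> M2"
  shows "punct I M =
           dual_on I (punct I (star e ` B)) \<inter>
           dual_on I (punct I (star e2 ` dual n (star_code n (dual n B) C)))"
proof -
  note codeC = assms(1)[unfolded is_code_def] and codeA = assms(2)[unfolded is_code_def]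
    and codeB = assms(3)[unfolded is_code_def] and elp = assms(4)[unfolded two_power_ELP_def]
  define D where "D = dual n (star_code n (dual n B) C)"
  define r :: "(nat \<Rightarrow> 'a) \<Rightarrow> nat \<Rightarrow> 'a" where "r = (\<lambda>x i. if i \<in> I then x i else 0)"
  have punct_r: "punct I X = r ` X" for X :: "(nat \<Rightarrow> 'a) set" by (simp add: punct_def r_def)
  have Isub: "I \<subseteq> {..<n}" by (auto simp: I_def supp_def)
  have finI: "finite I" using Isub finite_subset by blast
  have cardI: "card I = t" using assms(7) by (simp add: weight_def I_def)
  have eI: "e i = 0" if "i \<notin> I" for i
    using that assms(6) by (cases "i < n") (auto simp: I_def supp_def vecs_def)
  have e2I: "e2 i = 0" if "i \<notin> I" for i
    using eI[OF that] by (simp add: e2_def y_def vpow_def)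
  have sumI: "(\<Sum>i<n. f i) = (\<Sum>i\<in>I. f i)" if "\<And>i. i \<notin> I \<Longrightarrow> f i = 0" for f :: "nat \<Rightarrow> 'a"
    by (rule sum.mono_neutral_right) (use Isub that in auto)
  have cvec: "c \<in> vecs n" using codeC assms(5) by blast
  have key1: "inner n c (star a b) = 0" if "a \<in> A" "b \<in> B" for a b
  proof -
    have "star a b \<in> {star a b | a b. a \<in> A \<and> b \<in> B}" using that by blast
    then have "star a b \<in> star_code n A B" unfolding star_code_def using cspan_gen by (rule subsetD[rotated])
    then have "star a b \<in> dual n C" using elp by blast
    then show ?thesis using assms(5) by (simp add: dual_def)
  qed
  have key2: "star a c \<in> dual n B" if "a \<in> A" for a
  proof -
    have "star a c \<in> vecs n" using cvec by (simp add: vecs_def star_def)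
    moreover have "inner n b (star a c) = 0" if "b \<in> B" for b
    proof -
      have "inner n b (star a c) = inner n c (star a b)"
        unfolding inner_def star_def by (rule sum.cong) (simp_all add: mult_ac)
      then show ?thesis using key1 \<open>a \<in> A\<close> that by simp
    qed
    ultimately show ?thesis by (simp add: dual_def)
  qed
  have key3: "inner n (star (star a c) c) v = 0" if "a \<in> A" "v \<in> D" for a v
  proof -
    have "star (star a c) c \<in> {star a b | a b. a \<in> dual n B \<and> b \<in> C}" using key2[OF that(1)] assms(5) by blast
    then have "star (star a c) c \<in> star_code n (dual n B) C"
      unfolding star_code_def using cspan_gen by (rule subsetD[rotated])
    then show ?thesis using that(2) by (simp add: D_def dual_def)
  qed
  have m1: "inner n (star a y) b = inner n (star a e) b" if "a \<in> A" "b \<in> B" for a b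
  proof -
    have "inner n (star a y) b = inner n c (star a b) + inner n (star a e) b"
      unfolding inner_def star_def y_def sum.distrib[symmetric] by (rule sum.cong) (simp_all add: algebra_simps)
    then show ?thesis using key1[OF that] by simp
  qed
  have m2: "inner n (star a (vpow y 2)) v = inner n (star a e2) v" if "a \<in> A" "v \<in> D" for a v
  proof -
    have "inner n (star a (vpow y 2)) v = inner n (star (star a c) c) v + inner n (star a e2) v"
      unfolding inner_def star_def e2_def vpow_def sum.distrib[symmetric] by (rule sum.cong) (simp_all add: algebra_simps power2_eq_square)
    then show ?thesis using key3[OF that] by simp
  qed
  have d1: "(\<Sum>i\<in>I. r (star e b) i * r a i) = inner n (star a e) b" for a b
  proof -
    have "inner n (star a e) b = (\<Sum>i\<in>I. star a e i * b i)"
      unfolding inner_def by (rule sumI) (simp add: star_def eI)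
    also have "\<dots> = (\<Sum>i\<in>I. r (star e b) i * r a i)"
      by (rule sum.cong) (simp_all add: r_def star_def mult_ac)
    finally show ?thesis by simp
  qed
  have d2: "(\<Sum>i\<in>I. r (star e2 v) i * r a i) = inner n (star a e2) v" for a v
  proof -
    have "inner n (star a e2) v = (\<Sum>i\<in>I. star a e2 i * v i)"
      unfolding inner_def by (rule sumI) (simp add: star_def e2I)
    also have "\<dots> = (\<Sum>i\<in>I. r (star e2 v) i * r a i)"
      by (rule sum.cong) (simp_all add: r_def star_def mult_ac)
    finally show ?thesis by simp
  qed
  have rsup: "\<forall>i. i \<notin> I \<longrightarrow> r a i = 0" for a by (simp add: r_def)
  have P1: "(\<forall>b\<in>B. inner n (star a y) b = 0) \<longleftrightarrow> r a \<in> dual_on I (r ` star e ` B)"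
    if "a \<in> A" for a
  proof -
    have "(\<forall>b\<in>B. inner n (star a y) b = 0) \<longleftrightarrow> (\<forall>b\<in>B. (\<Sum>i\<in>I. r (star e b) i * r a i) = 0)"
      using m1[OF that] d1 by simp
    also have "\<dots> \<longleftrightarrow> r a \<in> dual_on I (r ` star e ` B)"
      using rsup[of a] unfolding dual_on_def by blast
    finally show ?thesis .
  qed
  have P2: "(\<forall>v\<in>D. inner n (star a (vpow y 2)) v = 0) \<longleftrightarrow> r a \<in> dual_on I (r ` star e2 ` D)"
    if "a \<in> A" for a
  proof -
    have "(\<forall>v\<in>D. inner n (star a (vpow y 2)) v = 0) \<longleftrightarrow> (\<forall>v\<in>D. (\<Sum>i\<in>I. r (star e2 v) i * r a i) = 0)"
      using m2[OF that] d2 by simp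
    also have "\<dots> \<longleftrightarrow> r a \<in> dual_on I (r ` star e2 ` D)"
      using rsup[of a] unfolding dual_on_def by blast
    finally show ?thesis .
  qed
  have P: "a \<in> M \<longleftrightarrow> r a \<in> dual_on I (r ` star e ` B) \<inter> dual_on I (r ` star e2 ` D)"
    if "a \<in> A" for a
  proof -
    have "a \<in> M \<longleftrightarrow> (\<forall>b\<in>B. inner n (star a y) b = 0) \<and> (\<forall>v\<in>D. inner n (star a (vpow y 2)) v = 0)"
      using that unfolding M_def M1_def M2_def D_def by blast
    then show ?thesis using P1[OF that] P2[OF that] by blast
  qed
  have span: "v \<in> r ` A" if "\<forall>i. i \<notin> I \<longrightarrow> v i = 0" for v
  proof (rule span_full[OF finI _ _ _ _ _ that])
    show "\<forall>w\<in>r ` A. \<forall>i. i \<notin> I \<longrightarrow> w i = 0" by (auto simp: r_def)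
    show "\<forall>w\<in>r ` A. \<forall>v\<in>r ` A. (\<lambda>i. w i + v i) \<in> r ` A"
    proof (intro ballI)
      fix w v assume "w \<in> r ` A" "v \<in> r ` A"
      then obtain a1 a2 where "a1 \<in> A" "a2 \<in> A" "w = r a1" "v = r a2" by blast
      moreover have "(\<lambda>i. a1 i + a2 i) \<in> A" using codeA \<open>a1 \<in> A\<close> \<open>a2 \<in> A\<close> by blast
      moreover have "(\<lambda>i. r a1 i + r a2 i) = r (\<lambda>i. a1 i + a2 i)" by (auto simp: r_def)
      ultimately show "(\<lambda>i. w i + v i) \<in> r ` A" by auto
    qed
    show "\<forall>k. \<forall>w\<in>r ` A. (\<lambda>i. k * w i) \<in> r ` A"
    proof (intro allI ballI)
      fix k w assume "w \<in> r ` A"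
      then obtain a1 where "a1 \<in> A" "w = r a1" by blast
      moreover have "(\<lambda>i. k * a1 i) \<in> A" using codeA \<open>a1 \<in> A\<close> by blast
      moreover have "(\<lambda>i. k * r a1 i) = r (\<lambda>i. k * a1 i)" by (auto simp: r_def)
      ultimately show "(\<lambda>i. k * w i) \<in> r ` A" by auto
    qed
    have "r (\<lambda>i. 0) = (\<lambda>i. 0)" by (simp add: r_def)
    then show "(\<lambda>i. 0) \<in> r ` A" using codeA by (metis image_eqI)
    show "\<forall>u. (\<forall>i. i \<notin> I \<longrightarrow> u i = 0) \<longrightarrow> (\<forall>w\<in>r ` A. (\<Sum>i\<in>I. w i * u i) = 0) \<longrightarrow> u = (\<lambda>i. 0)"
    proof (intro allI impI)
      fix u :: "nat \<Rightarrow> 'a"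
      assume us: "\<forall>i. i \<notin> I \<longrightarrow> u i = 0" and uo: "\<forall>w\<in>r ` A. (\<Sum>i\<in>I. w i * u i) = 0"
      show "u = (\<lambda>i. 0)"
      proof (rule ccontr)
        assume "u \<noteq> (\<lambda>i. 0)"
        then obtain i0 where i0: "u i0 \<noteq> 0" by auto
        then have i0I: "i0 \<in> I" using us by auto
        have uvec: "u \<in> vecs n" using us Isub by (auto simp: vecs_def)
        have "inner n x u = 0" if "x \<in> A" for x
        proof -
          have "inner n x u = (\<Sum>i\<in>I. x i * u i)" unfolding inner_def by (rule sumI) (simp add: us)
          also have "\<dots> = (\<Sum>i\<in>I. r x i * u i)" by (rule sum.cong) (auto simp: r_def)
          also have "\<dots> = 0" using uo that by auto
          finally show ?thesis .
        qed
        then have uD: "u \<in> dual n A" using uvec by (simp add: dual_def)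
        have suppu: "supp n u \<subseteq> I" using us Isub by (auto simp: supp_def)
        have wle: "weight n u \<le> t" unfolding weight_def cardI[symmetric]
          by (rule card_mono[OF finI suppu])
        have "i0 \<in> supp n u" using i0 i0I Isub by (auto simp: supp_def)
        then have wnz: "weight n u \<noteq> 0" unfolding weight_def
          by (metis card_0_eq empty_iff finite_subset[OF suppu finI])
        let ?S = "{weight n x | x. x \<in> dual n A \<and> weight n x \<noteq> 0}"
        have "?S \<subseteq> {..n}"
        proof
          fix k assume "k \<in> ?S"
          then obtain x :: "nat \<Rightarrow> 'a" where "k = weight n x" by blast
          moreover have "supp n x \<subseteq> {..<n}" by (auto simp: supp_def)
          then have "card (supp n x) \<le> n" using card_mono[of "{..<n}" "supp n x"] by simp
          ultimately show "k \<in> {..n}" by (simp add: weight_def)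
        qed
        then have finS: "finite ?S" using finite_subset by blast
        have "weight n u \<in> ?S" using uD wnz by blast
        then have "mindist n (dual n A) \<le> weight n u"
          unfolding mindist_def using uD wnz finS by (auto intro: Min_le)
        then show False using elp wle by linarith
      qed
    qed
  qed
  show ?thesis
    unfolding punct_r D_def[symmetric]
  proof
    show "r ` M \<subseteq> dual_on I (r ` star e ` B) \<inter> dual_on I (r ` star e2 ` D)"
    proof
      fix x assume "x \<in> r ` M"
      then obtain a where "a \<in> M" "x = r a" by blast
      moreover have "a \<in> A" using \<open>a \<in> M\<close> by (simp add: M_def M1_def)
      ultimately show "x \<in> dual_on I (r ` star e ` B) \<inter> dual_on I (r ` star e2 ` D)"
        using P by blast
    qed
    show "dual_on I (r ` star e ` B) \<inter> dual_on I (r ` star e2 ` D) \<subseteq> r ` M"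
    proof
      fix x assume x: "x \<in> dual_on I (r ` star e ` B) \<inter> dual_on I (r ` star e2 ` D)"
      then have "\<forall>i. i \<notin> I \<longrightarrow> x i = 0" by (simp add: dual_on_def)
      then obtain a where "a \<in> A" "x = r a" using span by blast
      then have "a \<in> M" using P x by blast
      then show "x \<in> r ` M" using \<open>x = r a\<close> by blast
    qed
  qed
qed

end
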